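(* Let $\Phi=[\mathbf a_1,\dots,\mathbf a_k]\in\mathbb R^{m\times k}$ have full column rank, let $\mathbf z\in\mathbb R^k$, and let $\mathbf w^\perp\in\mathbb R^m$ be nonzero and orthogonal to the range of $\Phi$; set $\mathbf y=\Phi\mathbf z+\mathbf w^\perp$. Let $I\subsetneq\{1,\dots,k\}$ be a proper subset and $\mathbf P$ the orthogonal projection onto the orthogonal complement of $\mathrm{span}\{\mathbf a_i: i\in I\}$ (the identity if $I=\emptyset$). Then $$\max_{j\in\{1,\dots,k\}}\frac{|\mathbf a_j^T\mathbf P\mathbf y|^2}{\|\mathbf P\mathbf y\|^2}\ \ge\ \frac{\sigma_{\min}^4(\Phi)\,z_{\min}^2}{\sigma_{\max}^2(\Phi)\,k\,z_{\min}^2+\|\mathbf w^\perp\|^2},$$ where $z_{\min}=\min_{j}|z_j|$ and $\sigma_{\min}(\Phi),\sigma_{\max}(\Phi)$ are the smallest and largest singular values of $\Phi$.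
   Context: All vectors and matrices are real; $\mathbf a^T$ denotes transpose. *)

theory Defs
  imports "HOL-Analysis.Analysis"
begin

definition orth_proj :: "'a::euclidean_space set \<Rightarrow> 'a \<Rightarrow> 'a" where
  "orth_proj V y = (THE p. p \<in> V \<and> y - p \<in> orthogonal_comp V)"

definition singular_values :: "real^'k^'m \<Rightarrow> real set" where
  "singular_values A =
     {sqrt l | l. \<exists>x. x \<noteq> 0 \<and> (transpose A ** A) *v x = l *\<^sub>R x}"

definition sigma_min :: "real^'k^'m \<Rightarrow> real" where
  "sigma_min A = Min (singular_values A)"

definition sigma_max :: "real^'k^'m \<Rightarrow> real" where
  "sigma_max A = Max (singular_values A)"

end

theory Submission
  imports Defs
begin

lemma orth_proj_eq:
  fixes L :: "'a::euclidean_space set"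
  assumes "subspace L" "p \<in> L" "q \<in> orthogonal_comp L"
  shows "orth_proj (orthogonal_comp L) (p + q) = q"
proof -
  have V: "subspace (orthogonal_comp L)" by (rule subspace_orthogonal_comp)
  have cc: "orthogonal_comp (orthogonal_comp L) = L" using assms(1) orthogonal_comp_self by blast
  show ?thesis
    unfolding orth_proj_def
  proof (rule the_equality)
    show "q \<in> orthogonal_comp L \<and> p + q - q \<in> orthogonal_comp (orthogonal_comp L)"
      using assms cc by simp
  next
    fix r assume r: "r \<in> orthogonal_comp L \<and> p + q - r \<in> orthogonal_comp (orthogonal_comp L)"
    have "q - r \<in> orthogonal_comp L" using r assms(3) V subspace_diff by blast
    moreover have "q - r \<in> L"
    proof -
      have "p + q - r - p \<in> L" using r cc assms(2) assms(1) subspace_diff by (metis)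
      then show ?thesis by (simp add: algebra_simps)
    qed
    ultimately have "(q - r) \<bullet> (q - r) = 0" unfolding orthogonal_comp_def orthogonal_def by auto
    then show "r = q" by simp
  qed
qed

lemma quad_expand:
  fixes Phi :: "real^'k^'m"
  shows "norm (Phi *v (x + e *\<^sub>R h))^2 - mu * norm (x + e *\<^sub>R h)^2
   = (norm (Phi *v x)^2 - mu * norm x^2) + 2*e*((Phi *v h) \<bullet> (Phi *v x) - mu * (h \<bullet> x))
     + e^2 * (norm (Phi *v h)^2 - mu * norm h^2)"
  unfolding power2_norm_eq_inner
  by (simp add: matrix_vector_right_distrib matrix_vector_mult_scaleR
      inner_add_left inner_add_right inner_commute algebra_simps power2_eq_square)

lemma rayleigh_eig:
  fixes Phi :: "real^'k^'m"
  obtains mu x0 where "x0 \<noteq> 0" "(transpose Phi ** Phi) *v x0 = mu *\<^sub>R x0" "mu \<ge> 0"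
     "\<And>x. mu * norm x ^2 \<le> norm (Phi *v x)^2"
proof -
  let ?f = "\<lambda>x::real^'k. norm (Phi *v x)^2"
  have cont: "continuous_on (sphere 0 1) ?f"
    by (intro continuous_intros linear_continuous_on matrix_vector_mul_linear)
  have "sphere (0::real^'k) 1 \<noteq> {}" by simp
  then obtain x0 where x0: "x0 \<in> sphere 0 1" and mn: "\<And>y. y \<in> sphere 0 1 \<Longrightarrow> ?f x0 \<le> ?f y"
    using continuous_attains_inf[OF compact_sphere _ cont] by blast
  define mu where "mu = ?f x0"
  have nx0: "norm x0 = 1" using x0 by simp
  have ray: "mu * norm x ^2 \<le> ?f x" for x
  proof (cases "x = 0")
    case True then show ?thesis by simp
  next
    case False
    let ?y = "inverse (norm x) *\<^sub>R x"
    have "?y \<in> sphere 0 1" using False by simp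
    then have "mu \<le> ?f ?y" using mn mu_def by blast
    also have "?f ?y = ?f x / norm x ^2"
      by (simp add: matrix_vector_mult_scaleR power_mult_distrib field_simps power2_eq_square)
    finally show ?thesis using False by (simp add: field_simps)
  qed
  define h where "h = (transpose Phi ** Phi) *v x0 - mu *\<^sub>R x0"
  have b: "(Phi *v h) \<bullet> (Phi *v x0) - mu * (h \<bullet> x0) = h \<bullet> h"
  proof -
    have "(Phi *v h) \<bullet> (Phi *v x0) = h \<bullet> ((transpose Phi ** Phi) *v x0)"
      by (metis dot_lmul_matrix matrix_vector_mul_assoc vector_transpose_matrix)
    then show ?thesis by (simp add: h_def inner_diff_left inner_diff_right algebra_simps)
  qed
  define H where "H = h \<bullet> h"
  define Q where "Q = norm (Phi *v h)^2 - mu * norm h^2"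
  have Q0: "Q \<ge> 0" using ray[of h] Q_def by simp
  have z0: "norm (Phi *v x0)^2 - mu * norm x0^2 = 0" using nx0 mu_def by simp
  have "\<forall>e. 0 \<le> 2*e*H + e^2*Q"
  proof
    fix e
    have "0 \<le> norm (Phi *v (x0 + e *\<^sub>R h))^2 - mu * norm (x0 + e *\<^sub>R h)^2"
      using ray[of "x0 + e *\<^sub>R h"] by simp
    then show "0 \<le> 2*e*H + e^2*Q" unfolding quad_expand z0 b H_def Q_def by simp
  qed
  note all = this
  have "H = 0"
  proof (rule ccontr)
    assume "H \<noteq> 0"
    then have Hp: "H > 0" using H_def by (simp add: less_le)
    define t where "t = H/(Q+1)"
    have tp: "t > 0" using Hp Q0 t_def by simp
    have "0 \<le> 2*(-t)*H + (-t)^2*Q" using all by blast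
    then have "t * (2*H) \<le> t * (t*Q)" by (simp add: power2_eq_square algebra_simps)
    then have "2*H \<le> t*Q" using tp by simp
    also have "t*Q = H * (Q/(Q+1))" by (simp add: t_def)
    also have "\<dots> \<le> H * 1" using Hp Q0 by (intro mult_left_mono) auto
    finally show False using Hp by simp
  qed
  then have "h = 0" by (simp add: H_def)
  then have eig: "(transpose Phi ** Phi) *v x0 = mu *\<^sub>R x0" by (simp add: h_def)
  show ?thesis
    by (rule that[of x0 mu]) (use nx0 eig ray mu_def in auto)
qed

lemma sym_form:
  fixes Phi :: "real^'k^'m"
  shows "x \<bullet> ((transpose Phi ** Phi) *v y) = (Phi *v x) \<bullet> (Phi *v y)"
proof -
  have "x \<bullet> ((transpose Phi ** Phi) *v y) = x \<bullet> (transpose Phi *v (Phi *v y))"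
    by (simp only: matrix_vector_mul_assoc)
  also have "\<dots> = (x v* transpose Phi) \<bullet> (Phi *v y)"
    by (simp only: dot_lmul_matrix)
  also have "\<dots> = (Phi *v x) \<bullet> (Phi *v y)"
    by (simp only: vector_transpose_matrix)
  finally show ?thesis .
qed

lemma eig_finite:
  fixes Phi :: "real^'k^'m"
  shows "finite {l. \<exists>x. x \<noteq> 0 \<and> (transpose Phi ** Phi) *v x = l *\<^sub>R x}"
    (is "finite ?E")
proof -
  let ?G = "transpose Phi ** Phi"
  define e where "e l = (SOME x. x \<noteq> 0 \<and> ?G *v x = l *\<^sub>R x)" for l
  have e: "e l \<noteq> 0 \<and> ?G *v e l = l *\<^sub>R e l" if "l \<in> ?E" for l
    using that unfolding e_def mem_Collect_eq by (rule someI_ex)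
  have inj: "inj_on e ?E"
  proof (rule inj_onI)
    fix l l' assume l: "l \<in> ?E" and l': "l' \<in> ?E" and eq: "e l = e l'"
    have "l *\<^sub>R e l = ?G *v e l" using e[OF l] by simp
    also have "\<dots> = ?G *v e l'" using eq by simp
    also have "\<dots> = l' *\<^sub>R e l'" using e[OF l'] by simp
    finally have "l *\<^sub>R e l = l' *\<^sub>R e l" using eq by simp
    moreover have "e l \<noteq> 0" using e[OF l] by simp
    ultimately show "l = l'" by simp
  qed
  have orth: "pairwise orthogonal (e ` ?E)"
  unfolding pairwise_def
  proof (intro ballI impI)
    fix a b assume "a \<in> e ` ?E" "b \<in> e ` ?E" "a \<noteq> b"
    then obtain l l' where l: "l \<in> ?E" and l': "l' \<in> ?E" and ab: "a = e l" "b = e l'" by blast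
    have ne: "e l \<noteq> e l'" using ab \<open>a \<noteq> b\<close> by simp
    then have "l \<noteq> l'" by auto
    have "e l \<bullet> (?G *v e l') = e l' \<bullet> (?G *v e l)"
      unfolding sym_form by (rule inner_commute)
    then have "l' * (e l \<bullet> e l') = l * (e l \<bullet> e l')"
      using e[OF l] e[OF l'] by (simp add: inner_commute)
    then have "e l \<bullet> e l' = 0" using \<open>l \<noteq> l'\<close> by simp
    then show "orthogonal a b" by (simp add: orthogonal_def ab)
  qed
  have "0 \<notin> e ` ?E"
  proof
    assume "0 \<in> e ` ?E"
    then obtain l where l: "l \<in> ?E" and "0 = e l" by blast
    then show False using e[OF l] by simp
  qed
  then have "independent (e ` ?E)" using orth by (intro pairwise_orthogonal_independent)
  then have "finite (e ` ?E)" by (rule independent_imp_finite)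
  then show ?thesis using inj by (rule finite_imageD)
qed

lemma setcompr_image: "{f l | l. P l} = f ` {l. P l}"
  by blast

lemma sigma_facts:
  fixes Phi :: "real^'k^'m"
  obtains mu where "mu \<ge> 0" "\<And>x. mu * norm x ^2 \<le> norm (Phi *v x)^2"
    "sigma_min Phi \<ge> 0" "(sigma_min Phi)^2 \<le> mu" "sigma_min Phi \<le> sigma_max Phi"
proof -
  obtain mu x0 where x0: "x0 \<noteq> 0" "(transpose Phi ** Phi) *v x0 = mu *\<^sub>R x0" "mu \<ge> 0"
     and ray: "\<And>x. mu * norm x ^2 \<le> norm (Phi *v x)^2"
    using rayleigh_eig by blast
  let ?E = "{l. \<exists>x. x \<noteq> 0 \<and> (transpose Phi ** Phi) *v x = l *\<^sub>R x}"
  have SV: "singular_values Phi = sqrt ` ?E" unfolding singular_values_def by (rule setcompr_image)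
  have fin: "finite (singular_values Phi)" unfolding SV by (rule finite_imageI[OF eig_finite])
  have "mu \<in> ?E" unfolding mem_Collect_eq by (rule exI[of _ x0], rule conjI[OF x0(1) x0(2)])
  then have mem: "sqrt mu \<in> singular_values Phi" unfolding SV by (rule imageI)
  have nonneg: "l \<ge> 0" if lE: "l \<in> ?E" for l
  proof -
    obtain x where x: "x \<noteq> 0" "(transpose Phi ** Phi) *v x = l *\<^sub>R x" using lE unfolding mem_Collect_eq by blast
    have "l * (x \<bullet> x) = (Phi *v x) \<bullet> (Phi *v x)"
      using sym_form[of x Phi x] x by simp
    moreover have "x \<bullet> x > 0" using x by simp
    moreover have "(Phi *v x) \<bullet> (Phi *v x) \<ge> 0" by simp
    ultimately have "0 \<le> l * (x \<bullet> x)" "0 < x \<bullet> x" by simp_all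
    then show ?thesis using zero_le_mult_iff by (metis linorder_not_le)
  qed
  have ne: "singular_values Phi \<noteq> {}" using mem by (intro notI) simp
  have "sigma_min Phi \<in> singular_values Phi" unfolding sigma_min_def by (rule Min_in[OF fin ne])
  then obtain l where "sigma_min Phi = sqrt l" "l \<in> ?E" unfolding SV by (rule imageE)
  then have s0: "sigma_min Phi \<ge> 0" using nonneg by simp
  have s1: "sigma_min Phi \<le> sqrt mu" unfolding sigma_min_def by (rule Min_le[OF fin mem])
  have s2: "sqrt mu \<le> sigma_max Phi" unfolding sigma_max_def by (rule Max_ge[OF fin mem])
  have "(sigma_min Phi)^2 \<le> (sqrt mu)^2" using s0 s1 by (simp add: power_mono)
  then have "(sigma_min Phi)^2 \<le> mu" using x0(3) by simp
  then show ?thesis using s1 s2 by (intro that[OF x0(3) ray s0]) simp_all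
qed

lemma final_arith:
  fixes s smax mu t K M zm W :: real
  assumes "0 \<le> s" "s \<le> smax" "s^2 \<le> mu" "0\<le>mu" "mu*t \<le> K*M" "mu^2*zm^2 \<le> M"
    "0 \<le> t" "0 < W" "0 \<le> M" "K>0"
  shows "s^4 * zm^2 / (smax^2 * K * zm^2 + W) \<le> M/(t+W)"
proof -
  have D: "smax^2 * K * zm^2 + W > 0" using assms by (simp add: add_nonneg_pos)
  have ss: "s^2 \<le> smax^2" using assms by (simp add: power_mono)
  have a1: "s^4 * zm^2 * t \<le> M * (smax^2 * K * zm^2)"
  proof -
    have "s^4 * zm^2 * t = (s^2 * zm^2) * (s^2 * t)" by (simp add: power2_eq_square power4_eq_xxxx)
    also have "\<dots> \<le> (smax^2 * zm^2) * (mu * t)"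
      using assms ss by (intro mult_mono mult_right_mono) auto
    also have "\<dots> \<le> (smax^2 * zm^2) * (K * M)"
      using assms by (intro mult_left_mono) auto
    finally show ?thesis by (simp add: algebra_simps)
  qed
  have a2: "s^4 * zm^2 * W \<le> M * W"
  proof -
    have "s^4 = (s^2)^2" by simp
    also have "\<dots> \<le> mu^2" using assms by (intro power_mono) auto
    finally have "s^4 * zm^2 \<le> M" using assms by (meson mult_right_mono order_trans zero_le_power2)
    then show ?thesis using assms by (intro mult_right_mono) auto
  qed
  have "s^4 * zm^2 * (t + W) \<le> M * (smax^2 * K * zm^2 + W)"
    using a1 a2 by (simp add: algebra_simps)
  then show ?thesis using D assms by (simp add: divide_simps add_nonneg_pos)
qed

lemma col_dot:
  fixes Phi :: "real^'k^'m"
  shows "column j Phi \<bullet> u = (transpose Phi *v u) $ j"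
  by (simp add: matrix_vector_mult_def transpose_def column_def inner_vec_def mult.commute)

lemma mv_dot:
  fixes Phi :: "real^'k^'m"
  shows "(Phi *v v) \<bullet> u = v \<bullet> (transpose Phi *v u)"
proof -
  have "(Phi *v v) \<bullet> u = (v v* transpose Phi) \<bullet> u" by (simp only: vector_transpose_matrix)
  also have "\<dots> = v \<bullet> (transpose Phi *v u)" by (rule dot_lmul_matrix)
  finally show ?thesis .
qed

theorem mainTheorem7:
  fixes Phi :: "real^'k^'m" and z :: "real^'k" and w :: "real^'m" and I :: "'k set"
  assumes full_rank: "rank Phi = CARD('k)"
    and w_nz: "w \<noteq> 0"
    and w_orth: "w \<in> orthogonal_comp (range ((*v) Phi))"
    and I_proper: "I \<subset> UNIV"
  shows "let y = Phi *v z + w;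
             P = orth_proj (orthogonal_comp (span ((\<lambda>i. column i Phi) ` I)));
             zmin = Min {\<bar>z $ j\<bar> | j. True}
         in (MAX j\<in>UNIV. \<bar>column j Phi \<bullet> P y\<bar>^2 / (norm (P y))^2)
            \<ge> (sigma_min Phi)^4 * zmin^2 /
               ((sigma_max Phi)^2 * real CARD('k) * zmin^2 + (norm w)^2)"
proof -
  obtain mu where mu0: "mu \<ge> 0" and ray: "\<And>x. mu * norm x ^2 \<le> norm (Phi *v x)^2"
    and s0: "sigma_min Phi \<ge> 0" and s1: "(sigma_min Phi)^2 \<le> mu"
    and s2: "sigma_min Phi \<le> sigma_max Phi"
    using sigma_facts[of Phi] by blast
  define L where "L = span ((\<lambda>i. column i Phi) ` I)"
  have subL: "subspace L" unfolding L_def by (rule subspace_span)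
  obtain p1 u where p1: "p1 \<in> L" and uorth: "\<And>x. x \<in> L \<Longrightarrow> orthogonal u x"
      and dec: "Phi *v z = p1 + u"
    using orthogonal_subspace_decomp_exists[of "(\<lambda>i. column i Phi) ` I" "Phi *v z"]
    unfolding L_def by metis
  define D where "D = (*v) Phi ` {d. \<forall>i. i \<notin> I \<longrightarrow> d $ i = 0}"
  have subD0: "subspace {d::real^'k. \<forall>i. i \<notin> I \<longrightarrow> d $ i = 0}"
    by (auto simp: subspace_def)
  have subD: "subspace D" unfolding D_def
    using subD0 by (rule linear_subspace_image[OF matrix_vector_mul_linear])
  have colD: "column i Phi \<in> D" if "i \<in> I" for i
  proof -
    have "axis i (1::real) \<in> {d. \<forall>i. i \<notin> I \<longrightarrow> d $ i = 0}" using that by (auto simp: axis_def)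
    then show ?thesis unfolding D_def matrix_vector_mult_basis[symmetric] by (rule imageI)
  qed
  have LD: "L \<subseteq> D" unfolding L_def by (rule span_minimal) (use colD subD in auto)
  obtain d where dI: "\<And>i. i \<notin> I \<Longrightarrow> d $ i = 0" and p1d: "p1 = Phi *v d"
    using LD p1 unfolding D_def by blast
  define v where "v = z - d"
  have uv: "u = Phi *v v" using dec p1d unfolding v_def by (simp add: matrix_vector_mult_diff_distrib)
  have vz: "v $ j = z $ j" if "j \<notin> I" for j using dI[OF that] by (simp add: v_def)
  have subR: "subspace (range ((*v) Phi))"
    by (rule linear_subspace_image[OF matrix_vector_mul_linear subspace_UNIV])
  have colR: "column i Phi \<in> range ((*v) Phi)" for i
    unfolding matrix_vector_mult_basis[symmetric] by (rule rangeI)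
  have LR: "L \<subseteq> range ((*v) Phi)" unfolding L_def by (rule span_minimal) (use colR subR in auto)
  have wR: "x \<bullet> w = 0" if "x \<in> range ((*v) Phi)" for x
    using w_orth that unfolding orthogonal_comp_def orthogonal_def by blast
  have uwL: "u + w \<in> orthogonal_comp L"
    unfolding orthogonal_comp_def orthogonal_def
  proof (intro CollectI ballI)
    fix x assume x: "x \<in> L"
    have "x \<bullet> u = 0" using uorth[OF x] unfolding orthogonal_def by (metis inner_commute)
    moreover have "x \<bullet> w = 0" using x LR wR by blast
    ultimately show "x \<bullet> (u + w) = 0" by (simp add: inner_add_right)
  qed
  have Py: "orth_proj (orthogonal_comp L) (Phi *v z + w) = u + w"
    using orth_proj_eq[OF subL p1 uwL] dec by (simp add: add.assoc)
  define c where "c = transpose Phi *v u"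
  have cI: "c $ j = 0" if "j \<in> I" for j
  proof -
    have "column j Phi \<in> L" unfolding L_def using that by (intro span_base imageI)
    then have "orthogonal u (column j Phi)" by (rule uorth)
    then have "column j Phi \<bullet> u = 0" unfolding orthogonal_def by (metis inner_commute)
    then show ?thesis by (simp add: c_def col_dot)
  qed
  have cdot: "column j Phi \<bullet> (u + w) = c $ j" for j
    using wR[OF colR[of j]] by (simp add: inner_add_right c_def col_dot)
  have uw: "u \<bullet> w = 0" using wR[of u] uv by simp
  define t where "t = u \<bullet> u"
  define W where "W = (norm w)^2"
  have Wp: "W > 0" using w_nz by (simp add: W_def)
  have t0: "t \<ge> 0" by (simp add: t_def)
  have nuw: "(norm (u + w))^2 = t + W"
    unfolding power2_norm_eq_inner t_def W_def using uw
    by (simp add: inner_add_left inner_add_right inner_commute)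
  have tv: "t = v \<bullet> c" unfolding t_def c_def by (simp add: uv mv_dot)
  define z' where "z' = (\<chi> j. if j \<in> I then 0 else z $ j)"
  have tz: "t = z' \<bullet> c" unfolding tv inner_vec_def
    by (rule sum.cong) (auto simp: z'_def cI vz)
  have rv: "mu * (v \<bullet> v) \<le> t" using ray[of v] by (simp add: power2_norm_eq_inner uv t_def)
  have zv: "z' \<bullet> z' \<le> v \<bullet> v" unfolding inner_vec_def
    by (rule sum_mono) (auto simp: z'_def vz)
  define f where "f j = (c $ j)^2" for j
  define M where "M = Max (range f)"
  have finr: "finite (range f)" by simp
  have fM: "f j \<le> M" for j unfolding M_def using finr by simp
  obtain j0 where j0: "M = f j0"
    using Max_in[OF finr] unfolding M_def by blast
  have M0: "M \<ge> 0" using j0 by (simp add: f_def)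
  define S where "S = - I"
  have Sne: "S \<noteq> {}" using I_proper unfolding S_def by blast
  have cardS: "card S \<ge> 1" using Sne by (simp add: Suc_le_eq card_gt_0_iff)
  have ccU: "c \<bullet> c = (\<Sum>j\<in>UNIV. f j)" by (simp add: inner_vec_def f_def power2_eq_square)
  have ccS: "c \<bullet> c = (\<Sum>j\<in>S. f j)" unfolding ccU S_def
    by (rule sum.mono_neutral_right) (auto simp: cI f_def)
  have ccK: "c \<bullet> c \<le> real CARD('k) * M" unfolding inner_vec_def
    using sum_bounded_above[of UNIV "\<lambda>j. c$j * c$j" M] fM by (simp add: f_def power2_eq_square)
  have ccS': "c \<bullet> c \<le> real (card S) * M"
    unfolding ccS using sum_bounded_above[of S f M] fM by simp
  define zmin where "zmin = Min {\<bar>z $ j\<bar> | j. True}"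
  have zset: "{\<bar>z $ j\<bar> | j. True} = range (\<lambda>j. \<bar>z $ j\<bar>)" by blast
  have zmin_le: "zmin \<le> \<bar>z $ j\<bar>" for j unfolding zmin_def zset by simp
  have zmin0: "zmin \<ge> 0"
  proof -
    have "zmin \<in> range (\<lambda>j. \<bar>z $ j\<bar>)" unfolding zmin_def zset by (rule Min_in) simp_all
    then show ?thesis by auto
  qed
  have zzS: "real (card S) * zmin^2 \<le> z' \<bullet> z'"
  proof -
    have "z' \<bullet> z' = (\<Sum>j\<in>UNIV. (z' $ j)^2)" by (simp add: inner_vec_def power2_eq_square)
    also have "\<dots> = (\<Sum>j\<in>S. (z' $ j)^2)" unfolding S_def
      by (rule sum.mono_neutral_right) (auto simp: z'_def)
    also have "\<dots> = (\<Sum>j\<in>S. (z $ j)^2)" by (rule sum.cong) (auto simp: z'_def S_def)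
    finally have "z' \<bullet> z' = (\<Sum>j\<in>S. (z $ j)^2)" .
    moreover have "real (card S) * zmin^2 \<le> (\<Sum>j\<in>S. (z $ j)^2)"
    proof (rule sum_bounded_below)
      fix j show "zmin^2 \<le> (z $ j)^2" using zmin_le[of j] zmin0
        by (metis power2_abs abs_ge_zero power_mono)
    qed
    ultimately show ?thesis by simp
  qed
  have CS1: "t^2 \<le> (v \<bullet> v) * (c \<bullet> c)" unfolding tv by (rule Cauchy_Schwarz_ineq)
  have CS2: "t^2 \<le> (z' \<bullet> z') * (c \<bullet> c)" unfolding tz by (rule Cauchy_Schwarz_ineq)
  have B: "mu * t \<le> real CARD('k) * M"
  proof (cases "t = 0")
    case True then show ?thesis using M0 by simp
  next
    case False
    then have tp: "t > 0" using t0 by simp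
    have "mu * t^2 \<le> mu * ((v \<bullet> v) * (c \<bullet> c))" using CS1 mu0 by (rule mult_left_mono)
    also have "\<dots> \<le> t * (c \<bullet> c)" using rv by (simp add: mult.assoc[symmetric] mult_right_mono)
    finally have "t * (mu * t) \<le> t * (c \<bullet> c)" by (simp add: power2_eq_square algebra_simps)
    then have "mu * t \<le> c \<bullet> c" using tp by simp
    then show ?thesis using ccK by simp
  qed
  have A: "mu^2 * zmin^2 \<le> M"
  proof (cases "z' \<bullet> z' = 0")
    case True
    then have "real (card S) * zmin^2 \<le> 0" using zzS by simp
    then have "zmin = 0" using cardS Sne by (simp add: mult_le_0_iff)
    then show ?thesis using M0 by simp
  next
    case False
    define Z where "Z = z' \<bullet> z'"
    have Zp: "Z > 0" using False Z_def by (simp add: less_le)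
    have muZ: "mu * Z \<le> t" using rv zv mu0 Z_def by (meson mult_left_mono order_trans)
    have "(mu * Z)^2 \<le> t^2" using muZ mu0 Zp by (intro power_mono) auto
    also have "\<dots> \<le> Z * (real (card S) * M)" using CS2 ccS' Zp Z_def
      by (meson mult_left_mono less_imp_le order_trans)
    finally have "Z * (mu^2 * Z) \<le> Z * (real (card S) * M)" by (simp add: power2_eq_square algebra_simps)
    then have "mu^2 * Z \<le> real (card S) * M" using Zp by simp
    moreover have "mu^2 * (real (card S) * zmin^2) \<le> mu^2 * Z" using zzS Z_def by (intro mult_left_mono) auto
    ultimately have "real (card S) * (mu^2 * zmin^2) \<le> real (card S) * M" by (simp add: algebra_simps)
    then show ?thesis using cardS by simp
  qed
  have fin_ineq: "(sigma_min Phi)^4 * zmin^2 / ((sigma_max Phi)^2 * real CARD('k) * zmin^2 + W) \<le> M / (t + W)"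
    by (rule final_arith[OF s0 s2 s1 mu0 B A t0 Wp M0]) simp
  have "M / (t + W) = \<bar>column j0 Phi \<bullet> (u + w)\<bar>^2 / (norm (u + w))^2"
    by (simp add: j0 f_def cdot nuw)
  also have "\<dots> \<le> (MAX j\<in>UNIV. \<bar>column j Phi \<bullet> (u + w)\<bar>^2 / (norm (u + w))^2)"
    by (rule Max_ge) (simp, rule rangeI)
  finally show ?thesis using fin_ineq unfolding Let_def Py[unfolded L_def] zmin_def[symmetric] W_def
    by (simp add: L_def)
qed

end
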